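(* Let $A:\mathbb R_+\to\mathbb R^{M\times M}$ be continuous with $A(0)=0$, and let $Y$ be the unique solution of the linear matrix ODE $Y'(\tau)=A(\tau)Y(\tau)$, $Y(0)=I_M$. Suppose $Y''(\tau)=B(\tau)Y(\tau)$, where $B(\tau)$ is positive semidefinite for all $\tau\ge0$. Then $A(\tau)$ is positive semidefinite for all $\tau\ge0$.
   Context: A real square matrix $C$ is called positive semidefinite if $b^\top Cb\ge0$ for all vectors $b$; symmetry is not required. *)

theory Defs
  imports "HOL-Analysis.Analysis"
begin

text \<open>A real square matrix C is positive semidefinite if b^T C b \<ge> 0 for all b
  (symmetry not required).\<close>
definition psd :: "real^'m^'m \<Rightarrow> bool" where
  "psd C \<longleftrightarrow> (\<forall>b :: real^'m. 0 \<le> b \<bullet> (C *v b))"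

end

theory Submission
  imports Defs
begin

lemma mv_bl: "bounded_linear (\<lambda>M::real^'n^'m. M *v c)"
proof -
  have "linear (\<lambda>M::real^'n^'m. M *v c)"
    by (rule linearI) (auto simp: vec_eq_iff matrix_vector_mult_def sum.distrib algebra_simps sum_distrib_left)
  then show ?thesis by (simp add: linear_conv_bounded_linear)
qed

lemma mono_helper:
  fixes f f' :: "real \<Rightarrow> real"
  assumes t: "0 \<le> t" and d: "\<forall>s\<ge>0. (f has_real_derivative f' s) (at s within {0..})"
    and p: "\<forall>s. 0 \<le> s \<longrightarrow> s \<le> t \<longrightarrow> 0 \<le> f' s"
  shows "f 0 \<le> f t"
proof (rule DERIV_nonneg_imp_increasing_open[OF t])
  fix x :: real assume x: "0 < x" "x < t"
  have "at x within {0..} = at x"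
    by (rule at_within_interior) (use x in auto)
  moreover have "(f has_real_derivative f' x) (at x within {0..})" using d x by simp
  ultimately have "(f has_real_derivative f' x) (at x)" by simp
  then show "\<exists>y. (f has_real_derivative y) (at x) \<and> 0 \<le> y" using p x by auto
next
  have "continuous (at s within {0..}) f" if "s \<in> {0..t}" for s
  proof -
    have "(f has_real_derivative f' s) (at s within {0..})" using d that by simp
    then show ?thesis by (rule DERIV_continuous)
  qed
  then have "\<forall>s\<in>{0..t}. continuous (at s within {0..}) f" by blast
  then have "\<forall>s\<in>{0..t}. continuous (at s within {0..t}) f"
    by (metis atLeastAtMost_iff atLeast_iff continuous_within_subset subsetI)
  then show "continuous_on {0..t} f" by (simp add: continuous_on_eq_continuous_within)
qed

theorem lemma7p5:
  fixes A B Y :: "real \<Rightarrow> real^'m^'m"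
  assumes A_cont: "continuous_on {0..} A"
    and A0: "A 0 = 0"
    and Y0: "Y 0 = mat 1"
    and Y_ode: "\<forall>t\<ge>0. (Y has_vector_derivative (A t ** Y t)) (at t within {0..})"
    and Y2: "\<forall>t\<ge>0. ((\<lambda>s. A s ** Y s) has_vector_derivative (B t ** Y t)) (at t within {0..})"
    and B_psd: "\<forall>t\<ge>0. psd (B t)"
  shows "\<forall>t\<ge>0. psd (A t)"
proof -
  have yd: "((\<lambda>s. Y s *v c) has_vector_derivative (A s *v (Y s *v c))) (at s within {0..})"
    if "s \<ge> 0" for c s
    using bounded_linear.has_vector_derivative[OF mv_bl Y_ode[rule_format, OF that], of c]
    by (simp add: matrix_vector_mul_assoc)
  have zd: "((\<lambda>s. (A s ** Y s) *v c) has_vector_derivative (B s *v (Y s *v c))) (at s within {0..})"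
    if "s \<ge> 0" for c s
    using bounded_linear.has_vector_derivative[OF mv_bl Y2[rule_format, OF that], of c]
    by (simp add: matrix_vector_mul_assoc)
  have inj: "c = 0" if t: "t \<ge> 0" and c: "Y t *v c = 0" for t c
  proof -
    have "compact (A ` {0..t})"
      by (rule compact_continuous_image, rule continuous_on_subset[OF A_cont]) auto
    then have "bounded (A ` {0..t})" by (rule compact_imp_bounded)
    then obtain K where K0: "K > 0" "\<forall>x\<in>A ` {0..t}. norm x \<le> K"
      using bounded_pos by blast
    then have K: "K > 0" "\<forall>s\<in>{0..t}. norm (A s) \<le> K" by auto
    define L where "L = real CARD('m) * real CARD('m) * K"
    have nb: "norm (A s *v x) \<le> L * norm x" if "s \<in> {0..t}" for s x
    proof -
      have "\<bar>A s $ i $ j\<bar> \<le> K" for i j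
      proof -
        have "\<bar>A s $ i $ j\<bar> \<le> norm (A s $ i)" by (rule component_le_norm_cart)
        also have "\<dots> \<le> norm (A s)" by (rule Finite_Cartesian_Product.norm_nth_le)
        also have "\<dots> \<le> K" using K(2) that by blast
        finally show ?thesis .
      qed
      then have "onorm ((*v) (A s)) \<le> L" unfolding L_def by (rule onorm_le_matrix_component)
      have "norm (A s *v x) \<le> onorm ((*v) (A s)) * norm x"
        by (rule onorm[OF matrix_vector_mul_bounded_linear])
      also have "\<dots> \<le> L * norm x" using \<open>onorm ((*v) (A s)) \<le> L\<close> by (rule mult_right_mono) simp
      finally show ?thesis .
    qed
    define y where "y s = Y s *v c" for s
    define h where "h s = (y s \<bullet> y s) * exp (2 * L * s)" for s
    define h' where "h' s = (y s \<bullet> (A s *v y s) + (A s *v y s) \<bullet> y s + 2 * L * (y s \<bullet> y s)) * exp (2 * L * s)" for s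
    have "h 0 \<le> h t"
    proof (rule mono_helper[OF t, of h h'])
      show "\<forall>s\<ge>0. (h has_real_derivative h' s) (at s within {0..})"
      proof safe
        fix s :: real assume s: "0 \<le> s"
        have g: "((\<lambda>s. y s \<bullet> y s) has_real_derivative (y s \<bullet> (A s *v y s) + (A s *v y s) \<bullet> y s)) (at s within {0..})"
          using bounded_bilinear.has_vector_derivative[OF bounded_bilinear_inner yd[OF s] yd[OF s], of c c]
          unfolding y_def has_real_derivative_iff_has_vector_derivative by simp
        have e: "((\<lambda>s. exp (2 * L * s)) has_real_derivative (exp (2 * L * s) * (2 * L))) (at s within {0..})"
          by (auto intro!: derivative_eq_intros)
        show "(h has_real_derivative h' s) (at s within {0..})"
          using DERIV_mult[OF g e] unfolding h_def h'_def
          by (simp add: algebra_simps)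
      qed
      show "\<forall>s. 0 \<le> s \<longrightarrow> s \<le> t \<longrightarrow> 0 \<le> h' s"
      proof safe
        fix s assume s: "0 \<le> s" "s \<le> t"
        have "\<bar>y s \<bullet> (A s *v y s)\<bar> \<le> norm (y s) * norm (A s *v y s)"
          by (rule Cauchy_Schwarz_ineq2)
        also have "\<dots> \<le> norm (y s) * (L * norm (y s))"
          using nb[of s "y s"] s by (simp add: mult_left_mono)
        also have "\<dots> = L * (y s \<bullet> y s)"
          by (simp add: power2_norm_eq_inner[symmetric] power2_eq_square)
        finally have "0 \<le> y s \<bullet> (A s *v y s) + (A s *v y s) \<bullet> y s + 2 * L * (y s \<bullet> y s)"
          by (simp add: inner_commute)
        then show "0 \<le> h' s" unfolding h'_def by simp
      qed
    qed
    moreover have "h t = 0" unfolding h_def y_def using c by simp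
    moreover have "h 0 = c \<bullet> c" unfolding h_def y_def using Y0 by simp
    ultimately have "c \<bullet> c \<le> 0" by simp
    then show "c = 0" by (metis inner_gt_zero_iff not_le)
  qed
  show ?thesis
  proof (intro allI impI)
    fix t :: real assume t: "0 \<le> t"
    show "psd (A t)" unfolding psd_def
    proof
      fix b :: "real^'m"
      obtain C where "C ** Y t = mat 1"
        using matrix_left_invertible_ker inj[OF t] by blast
      then have "Y t ** C = mat 1" using matrix_left_right_inverse by blast
      then have bY: "Y t *v (C *v b) = b" by (simp add: matrix_vector_mul_assoc)
      define c where "c = C *v b"
      define f where "f s = (Y s *v c) \<bullet> ((A s ** Y s) *v c)" for s
      define f' where "f' s = (Y s *v c) \<bullet> (B s *v (Y s *v c)) + (A s *v (Y s *v c)) \<bullet> ((A s ** Y s) *v c)" for s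
      have "f 0 \<le> f t"
      proof (rule mono_helper[OF t, of f f'])
        show "\<forall>s\<ge>0. (f has_real_derivative f' s) (at s within {0..})"
        proof safe
          fix s :: real assume s: "0 \<le> s"
          show "(f has_real_derivative f' s) (at s within {0..})"
            using bounded_bilinear.has_vector_derivative[OF bounded_bilinear_inner yd[OF s] zd[OF s], of c c]
            unfolding f_def f'_def has_real_derivative_iff_has_vector_derivative by simp
        qed
        show "\<forall>s. 0 \<le> s \<longrightarrow> s \<le> t \<longrightarrow> 0 \<le> f' s"
        proof safe
          fix s :: real assume s: "0 \<le> s" "s \<le> t"
          have "0 \<le> (Y s *v c) \<bullet> (B s *v (Y s *v c))"
            using B_psd s unfolding psd_def by auto
          moreover have "0 \<le> (A s *v (Y s *v c)) \<bullet> ((A s ** Y s) *v c)"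
            by (simp add: matrix_vector_mul_assoc)
          ultimately show "0 \<le> f' s" unfolding f'_def by simp
        qed
      qed
      moreover have "f 0 = 0" unfolding f_def using A0 by simp
      moreover have "f t = b \<bullet> (A t *v b)"
        unfolding f_def c_def using bY by (simp add: matrix_vector_mul_assoc[symmetric])
      ultimately show "0 \<le> b \<bullet> (A t *v b)" by simp
    qed
  qed
qed

end
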